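(* Let $p$ be an odd prime, $v$ an integer with $1<v<p-1$ such that $g=v$ is a primitive root modulo $p$, and $t\ge1$. For $z\in\{0,\dots,v-1\}^t$ let $\lambda(z)=\#\{x\in\{0,\dots,p-2\}:\ (v^{x+\iota}\,\%\,p)\,\%\,v=z(\iota)\ \forall\,0\le\iota<t\}$. Then $\lambda(z)>0$ for all $z\in\{0,\dots,v-1\}^t$ if and only if $p\ge v^t+1$.
   Context: $x\,\%\,m$ denotes the least nonnegative remainder of the integer $x$ modulo $m$. *)

theory Defs
  imports "HOL-Number_Theory.Number_Theory"
begin

definition pattern_count :: "nat \<Rightarrow> nat \<Rightarrow> nat \<Rightarrow> (nat \<Rightarrow> nat) \<Rightarrow> nat" where
  "pattern_count v p t z =
     card {x \<in> {0..p-2}. \<forall>i<t. (v ^ (x + i) mod p) mod v = z i}"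

end

theory Submission
  imports Defs
begin

lemma interval_lemma:
  fixes p v :: nat
  assumes "coprime p v" "v > 0"
  shows "(\<forall>i<t. w i < v) \<Longrightarrow> \<exists>D < v ^ t. \<forall>a < p. p * D \<le> a * v ^ t \<and> a * v ^ t < p * (D + 1)
           \<longrightarrow> (\<forall>i<t. (v ^ (i + 1) * a mod p) mod v = w i)"
proof (induction t arbitrary: w)
  case 0
  then show ?case by auto
next
  case (Suc t)
  have w0: "w 0 < v" using Suc.prems by auto
  obtain D' where D': "D' < v ^ t" and HD': "\<And>a. a < p \<Longrightarrow> p * D' \<le> a * v ^ t \<Longrightarrow> a * v ^ t < p * (D' + 1)
           \<Longrightarrow> (\<forall>i<t. (v ^ (i + 1) * a mod p) mod v = w (i + 1))"
    using Suc.IH[of "\<lambda>i. w (i + 1)"] Suc.prems by auto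
  have "\<exists>d < v. (w 0 + p * d) mod v = 0"
  proof -
    have cop: "coprime (int p) (int v)" using assms by simp
    obtain q where q: "[int p * q = 1] (mod int v)"
      using cong_solve_coprime_int[OF cop] by blast
    define d where "d = nat ((- int (w 0) * q) mod int v)"
    have dlt: "d < v" unfolding d_def using assms by (simp add: nat_less_iff)
    have "[int (w 0) + int p * int d = int (w 0) + int p * (- int (w 0) * q)] (mod int v)"
      unfolding d_def using assms
      by (intro cong_add cong_refl cong_mult) (simp add: cong_def)
    also have "int p * (- int (w 0) * q) = - int (w 0) * (int p * q)" by (simp add: mult_ac)
    also have "[int (w 0) + - int (w 0) * (int p * q) = int (w 0) + - int (w 0) * 1] (mod int v)"
      by (intro cong_add cong_refl cong_mult q)
    finally have "[int (w 0 + p * d) = int 0] (mod int v)" by simp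
    hence "[w 0 + p * d = 0] (mod v)" by (simp only: cong_int_iff)
    hence "(w 0 + p * d) mod v = 0" by (simp add: cong_def)
    thus ?thesis using dlt by (intro exI[of _ d] conjI)
  qed
  then obtain d where d: "d < v" "(w 0 + p * d) mod v = 0" by auto
  define D where "D = d * v ^ t + D'"
  have "D < v ^ Suc t"
  proof -
    have "D < d * v ^ t + v ^ t" using D' D_def by simp
    also have "\<dots> = (d + 1) * v ^ t" by simp
    also have "\<dots> \<le> v * v ^ t" using d by (intro mult_right_mono) auto
    finally show ?thesis by simp
  qed
  moreover have "\<forall>a < p. p * D \<le> a * v ^ Suc t \<and> a * v ^ Suc t < p * (D + 1)
           \<longrightarrow> (\<forall>i<Suc t. (v ^ (i + 1) * a mod p) mod v = w i)"
  proof (intro allI impI)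
    fix a i assume ap: "a < p" and iv: "p * D \<le> a * v ^ Suc t \<and> a * v ^ Suc t < p * (D + 1)"
      and i: "i < Suc t"
    have vt: "v ^ t > 0" using assms by simp
    have "p * d * v ^ t \<le> p * D" unfolding D_def by (simp add: algebra_simps)
    also have "\<dots> \<le> (a * v) * v ^ t" using iv by (simp add: algebra_simps)
    finally have l1: "p * d \<le> a * v" by (rule mult_right_le_imp_le[OF _ vt])
    have "(a * v) * v ^ t < p * (D + 1)" using iv by (simp add: algebra_simps)
    also have "\<dots> \<le> p * ((d + 1) * v ^ t)"
    proof (rule mult_left_mono)
      show "D + 1 \<le> (d + 1) * v ^ t" unfolding D_def using D' by simp
    qed simp
    also have "\<dots> = p * (d + 1) * v ^ t" by (rule mult.assoc[symmetric])
    finally have l2: "a * v < p * (d + 1)" using vt by (simp only: mult_less_cancel2)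
    have pos: "p > 0" using ap by simp
    have dv: "a * v div p = d" using l1 l2 by (intro div_nat_eqI) auto
    define b where "b = v * a mod p"
    have bdef: "b + p * d = v * a"
    proof -
      have "v * a = p * (v * a div p) + v * a mod p" by simp
      also have "v * a div p = d" using dv by (simp add: mult.commute)
      finally show ?thesis unfolding b_def by simp
    qed
    have blt: "b < p" unfolding b_def using pos by simp
    show "(v ^ (i + 1) * a mod p) mod v = w i"
    proof (cases i)
      case 0
      have "(b + p * d) mod v = 0" using bdef by simp
      hence "[b + p * d = w 0 + p * d] (mod v)" using d(2) by (simp add: cong_def)
      hence "[b = w 0] (mod v)" by (simp add: cong_add_rcancel_nat)
      hence "b mod v = w 0" using w0 by (simp add: cong_def)
      then show ?thesis using 0 b_def by simp
    next
      case (Suc j)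
      have j: "j < t" using Suc i by simp
      have "p * D' \<le> b * v ^ t \<and> b * v ^ t < p * (D' + 1)"
      proof -
        have e: "b * v ^ t + p * d * v ^ t = a * v ^ Suc t"
          using arg_cong[OF bdef, of "\<lambda>x. x * v ^ t"] by (simp add: algebra_simps)
        have e2: "p * D = p * d * v ^ t + p * D'" unfolding D_def by (simp add: algebra_simps)
        show ?thesis using iv e e2 by (simp add: algebra_simps)
      qed
      hence "(v ^ (j + 1) * b mod p) mod v = w (j + 1)"
        using HD'[OF blt] j by auto
      moreover have "v ^ (j + 1) * b mod p = v ^ (i + 1) * a mod p"
      proof -
        have "v ^ (j + 1) * b mod p = v ^ (j + 1) * (v * a) mod p"
          unfolding b_def by (rule mod_mult_right_eq)
        also have "v ^ (j + 1) * (v * a) = v ^ (i + 1) * a" unfolding Suc by simp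
        finally show ?thesis .
      qed
      ultimately show ?thesis using Suc by simp
    qed
  qed
  ultimately show ?case by blast
qed

theorem corollary7:
  fixes p v t :: nat
  assumes "prime p" and "odd p"
    and "1 < v" and "v < p - 1"
    and "residue_primroot p v"
    and "t \<ge> 1"
  shows "(\<forall>z :: nat \<Rightarrow> nat. (\<forall>i<t. z i < v) \<longrightarrow> pattern_count v p t z > 0)
         \<longleftrightarrow> p \<ge> v ^ t + 1"
proof -
  have p1: "p > 1" using assms(1) prime_gt_1_nat by blast
  have gen: "bij_betw (\<lambda>i. v ^ i mod p) {..<p - 1} {0<..<p}"
    using residue_primroot_is_generator[OF p1 assms(5)] assms(1)
    by (simp add: totient_prime totatives_prime)
  have pat: "\<And>x i. v ^ (x + i) mod p = v ^ i * (v ^ x mod p) mod p"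
    by (simp add: power_add mod_mult_right_eq mult.commute)
  show ?thesis
  proof
    assume H: "\<forall>z :: nat \<Rightarrow> nat. (\<forall>i<t. z i < v) \<longrightarrow> pattern_count v p t z > 0"
    define Z where "Z = PiE {..<t} (\<lambda>_. {..<v})"
    define P where "P z = {x \<in> {0..p-2}. \<forall>i<t. (v ^ (x + i) mod p) mod v = z i}" for z
    define f where "f z = (SOME x. x \<in> P z)" for z
    have fP: "f z \<in> P z" if "z \<in> Z" for z
    proof -
      have "\<forall>i<t. z i < v" using that unfolding Z_def by auto
      hence "card (P z) > 0" using H unfolding P_def pattern_count_def by auto
      hence "P z \<noteq> {}" by auto
      thus ?thesis unfolding f_def by (simp add: some_in_eq)
    qed
    have "inj_on f Z"
    proof (rule inj_onI)
      fix z z' assume z: "z \<in> Z" and z': "z' \<in> Z" and e: "f z = f z'"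
      show "z = z'"
      proof
        fix i show "z i = z' i"
        proof (cases "i < t")
          case True
          then show ?thesis using fP[OF z] fP[OF z'] e unfolding P_def by auto
        next
          case False
          then show ?thesis using z z' unfolding Z_def by (auto simp: PiE_def extensional_def)
        qed
      qed
    qed
    moreover have "f ` Z \<subseteq> {0..p-2}" using fP unfolding P_def by auto
    ultimately have "card Z \<le> card {0..p-2}"
      by (intro card_inj_on_le) auto
    moreover have "card Z = v ^ t" unfolding Z_def by (simp add: card_PiE)
    ultimately show "p \<ge> v ^ t + 1" using p1 by simp
  next
    assume pv: "p \<ge> v ^ t + 1"
    show "\<forall>z :: nat \<Rightarrow> nat. (\<forall>i<t. z i < v) \<longrightarrow> pattern_count v p t z > 0"
    proof (intro allI impI)
      fix z :: "nat \<Rightarrow> nat" assume z: "\<forall>i<t. z i < v"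
      define s where "s = t - 1"
      have ts: "t = Suc s" using assms(6) s_def by simp
      have cop: "coprime p v"
        using assms(5) by (simp add: residue_primroot_def)
      obtain D where D: "D < v ^ s" and HD: "\<And>a. a < p \<Longrightarrow> p * D \<le> a * v ^ s \<Longrightarrow> a * v ^ s < p * (D + 1)
           \<Longrightarrow> (\<forall>i<s. (v ^ (i + 1) * a mod p) mod v = z (i + 1))"
        using interval_lemma[OF cop, of s "\<lambda>i. z (i + 1)"] z ts assms(3) by auto
      have vs: "v ^ s > 0" using assms(3) by simp
      define c where "c = max 1 ((p * D + v ^ s - 1) div v ^ s)"
      have c1: "c \<ge> 1" unfolding c_def by simp
      have c2: "p * D \<le> c * v ^ s"
      proof -
        define m where "m = v ^ s"
        have m: "m > 0" using vs m_def by simp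
        have "p * D \<le> ((p * D + m - 1) div m) * m"
        proof -
          have "(p * D + m - 1) = ((p * D + m - 1) div m) * m + (p * D + m - 1) mod m" by simp
          moreover have "(p * D + m - 1) mod m < m" using m by simp
          ultimately show ?thesis by linarith
        qed
        moreover have "((p * D + m - 1) div m) * m \<le> c * m" unfolding c_def m_def
          by (intro mult_right_mono) auto
        ultimately have "p * D \<le> c * m" by linarith
        thus ?thesis using m_def by simp
      qed
      have vt: "v * v ^ s + 1 \<le> p" using pv ts by simp
      have c3: "(c + v - 1) * v ^ s < p * (D + 1)"
      proof -
        define m where "m = v ^ s"
        have m: "m > 0" using vs m_def by simp
        define q where "q = (p * D + m - 1) div m"
        have qm: "q * m \<le> p * D + m - 1" unfolding q_def by simp
        show ?thesis
        proof (cases "q \<le> 1")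
          case True
          hence "c = 1" unfolding c_def q_def[symmetric] m_def[symmetric] by simp
          hence "(c + v - 1) * v ^ s = v * v ^ s" by simp
          also have "\<dots> < p" using vt by simp
          also have "\<dots> \<le> p * (D + 1)" by simp
          finally show ?thesis .
        next
          case False
          hence "c = q" unfolding c_def q_def[symmetric] m_def[symmetric] by simp
          hence "(c + v - 1) * v ^ s = q * m + (v - 1) * m" using m_def False assms(3)
            by (simp add: algebra_simps)
          also have "\<dots> \<le> p * D + m - 1 + (v - 1) * m" using qm by simp
          also have "\<dots> = p * D + v * m - 1"
          proof -
            obtain k where k: "v = Suc k" using assms(3) by (cases v) auto
            have "(v - 1) * m = k * m" "v * m = m + k * m" using k by simp_all
            thus ?thesis using m by linarith
          qed
          also have "\<dots> < p * D + p" using vt m_def m by simp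
          finally show ?thesis by simp
        qed
      qed
      obtain a where a: "c \<le> a" "a < c + v" "a mod v = z 0"
      proof -
        define a where "a = c + (z 0 + v - c mod v) mod v"
        have z0: "z 0 < v" using z ts by simp
        have "a mod v = (c + (z 0 + v - c mod v)) mod v" unfolding a_def
          by (rule mod_add_right_eq)
        also have "\<dots> = (c mod v + (z 0 + v - c mod v)) mod v"
          by (rule mod_add_left_eq[symmetric])
        also have "c mod v + (z 0 + v - c mod v) = z 0 + v"
        proof -
          have "c mod v < v" using assms(3) by simp
          thus ?thesis by linarith
        qed
        finally have "a mod v = z 0" using z0 by simp
        moreover have "c \<le> a" "a < c + v" unfolding a_def using assms(3) by auto
        ultimately show ?thesis using that by blast
      qed
      have pa: "p * D \<le> a * v ^ s" "a * v ^ s < p * (D + 1)"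
      proof -
        show "p * D \<le> a * v ^ s" using c2 a(1) by (meson le_trans mult_le_mono1)
        have "a * v ^ s \<le> (c + v - 1) * v ^ s" using a(2) by (intro mult_right_mono) auto
        thus "a * v ^ s < p * (D + 1)" using c3 by linarith
      qed
      have ap: "a < p"
      proof -
        have "p * (D + 1) \<le> p * v ^ s" using D by (intro mult_left_mono) auto
        hence "a * v ^ s < p * v ^ s" using pa(2) by linarith
        thus ?thesis by simp
      qed
      have a0: "a \<in> {0<..<p}" using a ap c1 by auto
      have "a \<in> (\<lambda>i. v ^ i mod p) ` {..<p - 1}" using gen a0 unfolding bij_betw_def by simp
      then obtain x where x: "x < p - 1" "v ^ x mod p = a" by auto
      have "x \<in> {x \<in> {0..p-2}. \<forall>i<t. (v ^ (x + i) mod p) mod v = z i}"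
      proof -
        have "\<forall>i<t. (v ^ (x + i) mod p) mod v = z i"
        proof (intro allI impI)
          fix i assume i: "i < t"
          show "(v ^ (x + i) mod p) mod v = z i"
          proof (cases i)
            case 0 then show ?thesis using x a by simp
          next
            case (Suc j)
            have j: "j < s" using Suc i ts by simp
            have "(v ^ (j + 1) * a mod p) mod v = z (j + 1)" using HD[OF ap pa] j by blast
            moreover have "v ^ (x + i) mod p = v ^ (j + 1) * a mod p" using pat[of x i] x Suc by simp
            ultimately show ?thesis using Suc by simp
          qed
        qed
        thus ?thesis using x by auto
      qed
      hence "{x \<in> {0..p-2}. \<forall>i<t. (v ^ (x + i) mod p) mod v = z i} \<noteq> {}" by blast
      thus "pattern_count v p t z > 0" unfolding pattern_count_def
        by (simp add: card_gt_0_iff)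
    qed
  qed
qed

end
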